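(* Let $k \in \mathbb{N}$. The set of $\mathcal{P}$-positions of the Wythoff variant with terminal set $T_k = \{(x,y) \in \mathbb{Z}_{\ge 0}^2 : x+y \le k\}$ is exactly $P_k = T_k \cup \{(b_n,a_n) : n \in \mathbb{N}\} \cup \{(a_n,b_n) : n \in \mathbb{N}\}$.
   Context: Positions are pairs $(x,y) \in \mathbb{Z}_{\ge 0}^2$. In the Wythoff variant with terminal set $T_k$, from a position $(x,y) \notin T_k$ a move goes to any position in $\{(u,y) : 0 \le u < x\} \cup \{(x,v) : 0 \le v < y\} \cup \{(x-t,y-t) : 1 \le t \le \min(x,y)\}$ (horizontal, vertical, and diagonal queen moves); positions in $T_k$ have no moves. Players alternate; a player with no move loses (the player who moves into $T_k$ wins). A $\mathcal{P}$-position is one from which the previous player wins with optimal play; equivalently a position is $\mathcal{P}$ iff every move from it leads to a non-$\mathcal{P}$ position. Sequences: Fibonacci numbers $F_1 = F_2 = 1$, $F_{i+2} = F_{i+1} + F_i$. Let $\sigma$ be the substitution on finite sequences over $\{1,2\}$ replacing each entry $1$ by $2$ and each entry $2$ by $2,1$. Let $C_{1,1} = (1)$, $C_{i+1,1} = \sigma(C_{i,1})$. For $i \in \mathbb{N}$ let $C_i^{(k)}$ be the concatenation of $k$ copies of $C_{i,1}$. Let $(c_n)_{n \in \mathbb{N}}$ be the concatenation of $C_1^{(k)}, C_2^{(k)}, C_3^{(k)}, \dots$ in order, $d_n = c_n + 1$, $a_1 = k+1$, $a_n = k+1 + \sum_{i=1}^{n-1} c_i$, $b_1 = 2k+2$,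 $b_n = 2k+2 + \sum_{i=1}^{n-1} d_i$. *)

theory Defs imports Main begin

definition Tset :: "nat \<Rightarrow> (nat \<times> nat) set" where
  "Tset k = {(x, y). x + y \<le> k}"

definition moves :: "nat \<Rightarrow> nat \<Rightarrow> nat \<Rightarrow> (nat \<times> nat) set" where
  "moves k x y = (if (x, y) \<in> Tset k then {} else
     {(u, y) | u. u < x} \<union> {(x, v) | v. v < y} \<union>
     {(x - t, y - t) | t. 1 \<le> t \<and> t \<le> min x y})"

lemma moves_decrease: "(u, v) \<in> moves k x y \<Longrightarrow> u + v < x + y"
  by (auto simp: moves_def split: if_splits)

function isP :: "nat \<Rightarrow> nat \<Rightarrow> nat \<Rightarrow> bool" where
  "isP k x y = (\<forall>p \<in> moves k x y. \<not> isP k (fst p) (snd p))"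
  by auto
termination
  by (relation "measure (\<lambda>(k, x, y). x + y)")
     (auto dest: moves_decrease)

declare isP.simps [simp del]

definition sigma :: "nat list \<Rightarrow> nat list" where
  "sigma xs = concat (map (\<lambda>a. if a = 1 then [2] else if a = 2 then [2, 1] else [a]) xs)"

text \<open>Cw i = C_{i+1,1} (shifted to 0-based index).\<close>
fun Cw :: "nat \<Rightarrow> nat list" where
  "Cw 0 = [1]"
| "Cw (Suc i) = sigma (Cw i)"

text \<open>block k i = C_{i+1}^{(k)}: k copies of C_{i+1,1}.\<close>
definition block :: "nat \<Rightarrow> nat \<Rightarrow> nat list" where
  "block k i = concat (replicate k (Cw i))"

definition prefix_blocks :: "nat \<Rightarrow> nat \<Rightarrow> nat list" where
  "prefix_blocks k m = concat (map (block k) [0..<m])"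

text \<open>c_n (1-indexed) is the n-th entry of the infinite concatenation.  For k \<ge> 1
  every block is nonempty, so the first n blocks already contain at least n entries.\<close>
definition cseq :: "nat \<Rightarrow> nat \<Rightarrow> nat" where
  "cseq k n = prefix_blocks k n ! (n - 1)"

definition dseq :: "nat \<Rightarrow> nat \<Rightarrow> nat" where
  "dseq k n = cseq k n + 1"

definition aseq :: "nat \<Rightarrow> nat \<Rightarrow> nat" where
  "aseq k n = k + 1 + (\<Sum>i = 1..<n. cseq k i)"

definition bseq :: "nat \<Rightarrow> nat \<Rightarrow> nat" where
  "bseq k n = 2 * k + 2 + (\<Sum>i = 1..<n. dseq k i)"

end

theory Submission imports Defs begin

lemma sigma_Nil[simp]: "sigma [] = []" by (simp add: sigma_def)
lemma sigma_Cons[simp]: "sigma (x # xs) = (if x = 1 then [2] else if x = 2 then [2, 1] else [x]) @ sigma xs"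
  by (simp add: sigma_def)
lemma sigma_append[simp]: "sigma (xs @ ys) = sigma xs @ sigma ys" by (simp add: sigma_def)
lemma sigma_concat: "sigma (concat xss) = concat (map sigma xss)"
  by (induction xss) auto

lemma sigma_set: "set xs \<subseteq> {1,2} \<Longrightarrow> set (sigma xs) \<subseteq> {1,2}"
  by (induction xs) auto
lemma length_sigma: "set xs \<subseteq> {1,2} \<Longrightarrow> length (sigma xs) = sum_list xs"
  by (induction xs) auto
lemma sum_sigma: "set xs \<subseteq> {1,2} \<Longrightarrow> sum_list (sigma xs) = sum_list xs + length xs"
  by (induction xs) auto
lemma sum_ge_len: "set xs \<subseteq> {1,2} \<Longrightarrow> length xs \<le> sum_list xs"
  by (induction xs) auto

lemma Cw_set: "set (Cw i) \<subseteq> {1,2}"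
proof (induction i)
  case 0 then show ?case by simp
next
  case (Suc i) then show ?case using sigma_set[of "Cw i"] by simp
qed

lemma block_Suc: "block k (Suc i) = sigma (block k i)"
  by (simp add: block_def sigma_concat map_replicate)

lemma block_0: "block k 0 = replicate k 1"
  by (induction k) (auto simp: block_def)

lemma W_Suc: "prefix_blocks k (Suc m) = replicate k 1 @ sigma (prefix_blocks k m)"
proof (induction m)
  case 0 then show ?case by (simp add: prefix_blocks_def block_0)
next
  case (Suc m)
  have "prefix_blocks k (Suc (Suc m)) = prefix_blocks k (Suc m) @ block k (Suc m)"
    by (simp add: prefix_blocks_def)
  also have "\<dots> = replicate k 1 @ sigma (prefix_blocks k m @ block k m)"
    using Suc by (simp add: block_Suc)
  also have "prefix_blocks k m @ block k m = prefix_blocks k (Suc m)"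
    by (simp add: prefix_blocks_def)
  finally show ?case .
qed

lemma W_set: "set (prefix_blocks k m) \<subseteq> {1,2}"
  using Cw_set by (fastforce simp: prefix_blocks_def block_def)

lemma W_len: "k \<ge> 1 \<Longrightarrow> m \<le> length (prefix_blocks k m)"
proof (induction m)
  case 0 then show ?case by simp
next
  case (Suc m)
  have "length (prefix_blocks k (Suc m)) = k + sum_list (prefix_blocks k m)"
    by (simp add: W_Suc length_sigma[OF W_set])
  moreover have "length (prefix_blocks k m) \<le> sum_list (prefix_blocks k m)"
    by (rule sum_ge_len[OF W_set])
  ultimately show ?case using Suc by simp
qed

lemma W_prefix: "m \<le> n \<Longrightarrow> \<exists>zs. prefix_blocks k n = prefix_blocks k m @ zs"
proof (induction n rule: dec_induct)
  case base then show ?case by simp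
next
  case (step n)
  then obtain zs where "prefix_blocks k n = prefix_blocks k m @ zs" by blast
  then show ?case by (simp add: prefix_blocks_def)
qed

lemma cseq_W:
  assumes "k \<ge> 1" "1 \<le> n" "n \<le> length (prefix_blocks k N)"
  shows "cseq k n = prefix_blocks k N ! (n - 1)"
proof (cases "n \<le> N")
  case True
  then obtain zs where "prefix_blocks k N = prefix_blocks k n @ zs" using W_prefix by blast
  moreover have "n - 1 < length (prefix_blocks k n)" using W_len[OF assms(1), of n] assms by simp
  ultimately show ?thesis by (simp add: cseq_def nth_append)
next
  case False
  then obtain zs where "prefix_blocks k n = prefix_blocks k N @ zs" using W_prefix[of N n] by auto
  moreover have "n - 1 < length (prefix_blocks k N)" using assms by simp
  ultimately show ?thesis by (simp add: cseq_def nth_append)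
qed

lemma c12: "k \<ge> 1 \<Longrightarrow> n \<ge> 1 \<Longrightarrow> cseq k n \<in> {1,2}"
  using cseq_W[of k n n] W_len[of k n] W_set[of k n]
  by (metis diff_less less_le_trans nth_mem subsetD zero_less_one)

lemma c_le_k: "k \<ge> 1 \<Longrightarrow> 1 \<le> n \<Longrightarrow> n \<le> k \<Longrightarrow> cseq k n = 1"
  using cseq_W[of k n 1] by (simp add: W_Suc prefix_blocks_def block_0)

lemma sumc: "k \<ge> 1 \<Longrightarrow> m \<le> length (prefix_blocks k N) \<Longrightarrow>
   (\<Sum>i = 1..<Suc m. cseq k i) = sum_list (take m (prefix_blocks k N))"
proof (induction m)
  case 0 then show ?case by simp
next
  case (Suc m)
  have "(\<Sum>i = 1..<Suc (Suc m). cseq k i) = (\<Sum>i = 1..<Suc m. cseq k i) + cseq k (Suc m)"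
    by simp
  also have "cseq k (Suc m) = prefix_blocks k N ! m" using cseq_W[of k "Suc m" N] Suc.prems by simp
  finally show ?case using Suc by (simp add: take_Suc_conv_app_nth)
qed

lemma sigma_pos:
  assumes "set xs \<subseteq> {1,2}" "j < length xs"
  shows "sigma xs ! sum_list (take j xs) = 2 \<and>
         (xs ! j = 2 \<longrightarrow> sigma xs ! (sum_list (take j xs) + 1) = 1) \<and>
         sum_list (take j xs) + xs ! j \<le> sum_list xs \<and>
         take (sum_list (take j xs)) (sigma xs) = sigma (take j xs)"
proof -
  have e: "xs = take j xs @ xs ! j # drop (Suc j) xs" using assms(2) by (simp add: id_take_nth_drop)
  have st: "set (take j xs) \<subseteq> {1,2}" using assms(1) by (meson set_take_subset order_trans)
  have x: "xs ! j \<in> {1,2}" using assms nth_mem by blast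
  have l: "length (sigma (take j xs)) = sum_list (take j xs)" by (rule length_sigma[OF st])
  have s: "sigma xs = sigma (take j xs) @ sigma [xs ! j] @ sigma (drop (Suc j) xs)"
    by (subst e) simp
  have "sum_list xs = sum_list (take j xs) + xs ! j + sum_list (drop (Suc j) xs)"
    by (subst e) simp
  then show ?thesis using x l s
    by (auto simp: nth_append)
qed


lemma a_Suc_sum: "k \<ge> 1 \<Longrightarrow> m \<le> length (prefix_blocks k N) \<Longrightarrow>
   aseq k (Suc m) = k + 1 + sum_list (take m (prefix_blocks k N))"
  using sumc by (simp add: aseq_def)

lemma sum_d: "(\<Sum>i = 1..<Suc m. dseq k i) = (\<Sum>i = 1..<Suc m. cseq k i) + m"
proof -
  have "(\<Sum>i = 1..<Suc m. dseq k i) = (\<Sum>i = 1..<Suc m. cseq k i + 1)" by (simp add: dseq_def)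
  also have "\<dots> = (\<Sum>i = 1..<Suc m. cseq k i) + m" by (simp only: sum.distrib) simp
  finally show ?thesis .
qed

lemma key:
  assumes k: "k \<ge> 1"
  shows "cseq k (aseq k (Suc m)) = 2 \<and>
         (cseq k (Suc m) = 2 \<longrightarrow> cseq k (aseq k (Suc m) + 1) = 1) \<and>
         aseq k (aseq k (Suc m)) + 1 = bseq k (Suc m)"
proof -
  define L where "L = prefix_blocks k (Suc m)"
  define s where "s = sum_list (take m L)"
  have Ls: "set L \<subseteq> {1,2}" unfolding L_def by (rule W_set)
  have mL: "m < length L" using W_len[OF k, of "Suc m"] unfolding L_def by simp
  have a: "aseq k (Suc m) = k + 1 + s" using a_Suc_sum[OF k, of m "Suc m"] mL
    unfolding s_def L_def by simp
  have L2: "prefix_blocks k (Suc (Suc m)) = replicate k 1 @ sigma L" unfolding L_def by (rule W_Suc)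
  have len2: "length (prefix_blocks k (Suc (Suc m))) = k + sum_list L"
    using L2 length_sigma[OF Ls] by simp
  have sp: "sigma L ! s = 2 \<and> (L ! m = 2 \<longrightarrow> sigma L ! (s + 1) = 1) \<and>
         s + L ! m \<le> sum_list L \<and> take s (sigma L) = sigma (take m L)"
    using sigma_pos[OF Ls mL] unfolding s_def .
  have Lm: "L ! m \<in> {1,2}" using Ls mL nth_mem by blast
  have cm: "cseq k (Suc m) = L ! m" using cseq_W[OF k, of "Suc m" "Suc m"] mL unfolding L_def by simp
  have c1: "cseq k (aseq k (Suc m)) = 2"
  proof -
    have "cseq k (k + 1 + s) = prefix_blocks k (Suc (Suc m)) ! (k + s)"
      using cseq_W[OF k, of "k+1+s" "Suc (Suc m)"] len2 sp Lm by auto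
    then show ?thesis using a L2 sp by (simp add: nth_append)
  qed
  have c2: "cseq k (Suc m) = 2 \<longrightarrow> cseq k (aseq k (Suc m) + 1) = 1"
  proof
    assume "cseq k (Suc m) = 2"
    then have "L ! m = 2" using cm by simp
    then have "cseq k (k + 1 + s + 1) = prefix_blocks k (Suc (Suc m)) ! (k + s + 1)"
      using cseq_W[OF k, of "k+1+s+1" "Suc (Suc m)"] len2 sp by auto
    then show "cseq k (aseq k (Suc m) + 1) = 1" using a L2 sp \<open>L ! m = 2\<close>
      by (simp add: nth_append)
  qed
  have c3: "aseq k (aseq k (Suc m)) + 1 = bseq k (Suc m)"
  proof -
    have "aseq k (Suc (k + s)) = k + 1 + sum_list (take (k + s) (prefix_blocks k (Suc (Suc m))))"
      using a_Suc_sum[OF k, of "k+s" "Suc (Suc m)"] len2 sp Lm by auto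
    also have "take (k + s) (prefix_blocks k (Suc (Suc m))) = replicate k 1 @ sigma (take m L)"
      using L2 sp by simp
    also have "sum_list (replicate k 1 @ sigma (take m L)) = k + s + m"
    proof -
      have st: "set (take m L) \<subseteq> {1,2}" using Ls by (meson set_take_subset order_trans)
      show ?thesis using sum_sigma[OF st] mL unfolding s_def by (simp add: sum_list_replicate)
    qed
    finally have A: "aseq k (Suc (k + s)) = k + 1 + (k + s + m)" .
    have "bseq k (Suc m) = 2 * k + 2 + (\<Sum>i = 1..<Suc m. cseq k i) + m"
      unfolding bseq_def sum_d by simp
    also have "(\<Sum>i = 1..<Suc m. cseq k i) = s"
      using sumc[OF k, of m "Suc m"] mL unfolding s_def L_def by simp
    finally show ?thesis using A a by simp
  qed
  show ?thesis using c1 c2 c3 by blast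
qed

lemma a_step: "n \<ge> 1 \<Longrightarrow> aseq k (Suc n) = aseq k n + cseq k n"
  by (simp add: aseq_def)

lemma a_mono: assumes k: "k \<ge> 1" shows "1 \<le> m \<Longrightarrow> m < n \<Longrightarrow> aseq k m < aseq k n"
proof (induction n)
  case 0 then show ?case by simp
next
  case (Suc n)
  have "n \<ge> 1" using Suc by simp
  then have "aseq k (Suc n) = aseq k n + cseq k n" "cseq k n \<ge> 1"
    using a_step c12[OF k, of n] by auto
  then show ?case using Suc by (cases "m = n") auto
qed

lemma a_mono_iff: "k \<ge> 1 \<Longrightarrow> 1 \<le> m \<Longrightarrow> 1 \<le> n \<Longrightarrow> aseq k m < aseq k n \<longleftrightarrow> m < n"
  using a_mono by (metis linorder_neq_iff not_less_iff_gr_or_eq)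

lemma a_inj: "k \<ge> 1 \<Longrightarrow> 1 \<le> m \<Longrightarrow> 1 \<le> n \<Longrightarrow> aseq k m = aseq k n \<longleftrightarrow> m = n"
  using a_mono by (metis linorder_neq_iff less_irrefl)

lemma a_ge: "n \<ge> 1 \<Longrightarrow> k + 1 \<le> aseq k n" by (simp add: aseq_def)
lemma a_1: "aseq k 1 = k + 1" by (simp add: aseq_def)

lemma b_eq: "n \<ge> 1 \<Longrightarrow> bseq k n = aseq k n + k + n"
proof -
  assume "n \<ge> 1"
  then obtain m where n: "n = Suc m" by (cases n) auto
  have "bseq k n = 2 * k + 2 + (\<Sum>i = 1..<Suc m. cseq k i) + m"
    unfolding n bseq_def sum_d by simp
  then show ?thesis by (simp add: aseq_def n)
qed

lemma floor_a:
  assumes k: "k \<ge> 1" shows "k + 1 \<le> z \<Longrightarrow> \<exists>n\<ge>1. aseq k n \<le> z \<and> z < aseq k (Suc n)"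
proof (induction z rule: dec_induct)
  case base
  have "aseq k 1 < aseq k 2" using a_mono[OF k, of 1 2] by simp
  then show ?case using a_1[of k] by (intro exI[of _ 1]) (simp add: numeral_2_eq_2)
next
  case (step z)
  then obtain n where n: "n \<ge> 1" "aseq k n \<le> z" "z < aseq k (Suc n)" by blast
  show ?case
  proof (cases "Suc z < aseq k (Suc n)")
    case True then show ?thesis using n by auto
  next
    case False
    then have "Suc z = aseq k (Suc n)" using n by simp
    moreover have "aseq k (Suc n) < aseq k (Suc (Suc n))" using a_mono[OF k, of "Suc n" "Suc (Suc n)"] by simp
    ultimately show ?thesis by (intro exI[of _ "Suc n"]) simp
  qed
qed

lemma disjoint: assumes k: "k \<ge> 1" "j \<ge> 1" "m \<ge> 1" shows "aseq k j \<noteq> bseq k m"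
proof
  assume eq: "aseq k j = bseq k m"
  obtain m' where m: "m = Suc m'" using k by (cases m) auto
  have K: "cseq k (aseq k m) = 2" "aseq k (aseq k m) + 1 = bseq k m"
    using key[OF k(1), of m'] m by auto
  have am: "aseq k m \<ge> 1" using a_ge[of m k] k by simp
  have "aseq k (Suc (aseq k m)) = aseq k (aseq k m) + 2" using a_step[OF am] K by simp
  then have "aseq k (aseq k m) < aseq k j" "aseq k j < aseq k (Suc (aseq k m))" using eq K by auto
  then have "aseq k m < j" "j < Suc (aseq k m)" using a_mono_iff[OF k(1)] am k by auto
  then show False by simp
qed

lemma cover: assumes k: "k \<ge> 1" and z: "k + 1 \<le> z"
  shows "\<exists>n\<ge>1. z = aseq k n \<or> z = bseq k n"
proof -
  obtain n where n: "n \<ge> 1" "aseq k n \<le> z" "z < aseq k (Suc n)" using floor_a[OF k z] by blast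
  show ?thesis
  proof (cases "z = aseq k n")
    case True then show ?thesis using n by auto
  next
    case False
    have cn: "cseq k n \<in> {1,2}" using c12[OF k n(1)] .
    have an: "aseq k (Suc n) = aseq k n + cseq k n" using a_step[OF n(1)] .
    have c2: "cseq k n = 2" and zz: "z = aseq k n + 1" using False n cn an by auto
    have nk: "k + 1 \<le> n" using c_le_k[OF k n(1)] c2 by (cases "n \<le> k") auto
    obtain m where m: "m \<ge> 1" "aseq k m \<le> n" "n < aseq k (Suc m)" using floor_a[OF k nk] by blast
    obtain m' where m': "m = Suc m'" using m by (cases m) auto
    show ?thesis
    proof (cases "n = aseq k m")
      case True
      then have "z = bseq k m" using key[OF k, of m'] m' zz by simp
      then show ?thesis using m by auto
    next
      case False
      have cm: "cseq k m \<in> {1,2}" using c12[OF k m(1)] .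
      have am: "aseq k (Suc m) = aseq k m + cseq k m" using a_step[OF m(1)] .
      have "cseq k m = 2" "n = aseq k m + 1" using False m cm am by auto
      then have "cseq k n = 1" using key[OF k, of m'] m' by simp
      then show ?thesis using c2 by simp
    qed
  qed
qed


definition inP :: "nat \<Rightarrow> nat \<Rightarrow> nat \<Rightarrow> bool" where
  "inP k x y \<longleftrightarrow> x + y \<le> k \<or> (\<exists>n\<ge>1. (x, y) = (bseq k n, aseq k n)) \<or> (\<exists>n\<ge>1. (x, y) = (aseq k n, bseq k n))"

lemma inP_sym: "inP k x y = inP k y x"
  unfolding inP_def by auto

lemma moves_sym: "(u, v) \<in> moves k x y \<longleftrightarrow> (v, u) \<in> moves k y x"
  unfolding moves_def Tset_def by auto

lemma no_move_pair:
  assumes k: "k \<ge> 1" and n: "n \<ge> 1" and mv: "(u, v) \<in> moves k (aseq k n) (bseq k n)"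
  shows "\<not> inP k u v"
proof -
  let ?a = "aseq k" and ?b = "bseq k"
  have bn: "?b n = ?a n + k + n" using b_eq n by simp
  have an: "?a n \<ge> k + 1" using a_ge n by simp
  have bm: "\<And>m. m \<ge> 1 \<Longrightarrow> ?b m = ?a m + k + m" using b_eq by simp
  have nT: "(aseq k n, bseq k n) \<notin> Tset k" using an bn by (simp add: Tset_def)
  from mv nT have cases: "(v = ?b n \<and> u < ?a n) \<or> (u = ?a n \<and> v < ?b n) \<or>
      (\<exists>t. 1 \<le> t \<and> t \<le> ?a n \<and> u = ?a n - t \<and> v = ?b n - t)"
    unfolding moves_def using bn by auto
  show ?thesis
  proof
    assume P: "inP k u v"
    from cases show False
    proof (elim disjE exE conjE)
      assume uv: "v = ?b n" "u < ?a n"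
      from P show False unfolding inP_def
      proof (elim disjE exE conjE)
        assume "u + v \<le> k" then show False using uv bn by simp
      next
        fix m assume m: "m \<ge> 1" "(u, v) = (?b m, ?a m)"
        then show False using uv disjoint[OF k m(1) n] by simp
      next
        fix m assume m: "m \<ge> 1" "(u, v) = (?a m, ?b m)"
        then have "?a m + m = ?a n + n" using uv bn bm[OF m(1)] by simp
        then have "m = n" using a_mono[OF k, of m n] a_mono[OF k, of n m] m(1) n
          by (metis add_less_mono linorder_neq_iff less_irrefl)
        then show False using m uv by simp
      qed
    next
      assume uv: "u = ?a n" "v < ?b n"
      from P show False unfolding inP_def
      proof (elim disjE exE conjE)
        assume "u + v \<le> k" then show False using uv an by simp
      next
        fix m assume m: "m \<ge> 1" "(u, v) = (?b m, ?a m)"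
        then show False using uv disjoint[OF k n m(1)] by simp
      next
        fix m assume m: "m \<ge> 1" "(u, v) = (?a m, ?b m)"
        then have "m = n" using uv a_inj[OF k m(1) n] by simp
        then show False using m uv by simp
      qed
    next
      fix t assume t: "1 \<le> t" "t \<le> ?a n" "u = ?a n - t" "v = ?b n - t"
      from P show False unfolding inP_def
      proof (elim disjE exE conjE)
        assume "u + v \<le> k"
        moreover have "v \<ge> k + n" using t bn by simp
        ultimately show False using n by simp
      next
        fix m assume m: "m \<ge> 1" "(u, v) = (?b m, ?a m)"
        then have "aseq k n - t = aseq k m + k + m" "aseq k n + k + n - t = aseq k m"
          using t bn bm[OF m(1)] by auto
        then show False using t n by arith
      next
        fix m assume m: "m \<ge> 1" "(u, v) = (?a m, ?b m)"
        then have "aseq k n - t = aseq k m" "aseq k n + k + n - t = aseq k m + k + m"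
          using t bn bm[OF m(1)] by auto
        then have "m = n" using t by arith
        then show False using m t an by auto
      qed
    qed
  qed
qed

lemma no_move:
  assumes k: "k \<ge> 1" and P: "inP k x y" and nT: "x + y > k" and mv: "(u, v) \<in> moves k x y"
  shows "\<not> inP k u v"
proof -
  from P nT obtain n where n: "n \<ge> 1" and
    d: "(x, y) = (bseq k n, aseq k n) \<or> (x, y) = (aseq k n, bseq k n)" unfolding inP_def by auto
  from d show ?thesis
  proof
    assume "(x, y) = (bseq k n, aseq k n)"
    then have "(v, u) \<in> moves k (aseq k n) (bseq k n)" using mv moves_sym by auto
    then show ?thesis using no_move_pair[OF k n] inP_sym by blast
  next
    assume "(x, y) = (aseq k n, bseq k n)"
    then show ?thesis using no_move_pair[OF k n] mv by auto
  qed
qed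

lemma exists_move_le:
  assumes k: "k \<ge> 1" and nT: "x + y > k" and xy: "x \<le> y" and nP: "\<not> inP k x y"
  shows "\<exists>u v. (u, v) \<in> moves k x y \<and> inP k u v"
proof -
  have nT': "(x, y) \<notin> Tset k" using nT by (simp add: Tset_def)
  have mvI1: "\<And>u. u < x \<Longrightarrow> (u, y) \<in> moves k x y" using nT' by (simp add: moves_def)
  have mvI2: "\<And>v. v < y \<Longrightarrow> (x, v) \<in> moves k x y" using nT' by (simp add: moves_def)
  have mvI3: "\<And>t. 1 \<le> t \<Longrightarrow> t \<le> x \<Longrightarrow> (x - t, y - t) \<in> moves k x y"
    using nT' xy by (auto simp: moves_def)
  show ?thesis
  proof (cases "x \<le> k")
    case True
    then have "(x, 0) \<in> moves k x y" "inP k x 0" using mvI2 nT k by (auto simp: inP_def)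
    then show ?thesis by blast
  next
    case xk: False
    show ?thesis
    proof (cases "y - x \<le> k")
      case True
      then have "(x - x, y - x) \<in> moves k x y" "inP k (x - x) (y - x)" using mvI3[of x] xk
        by (auto simp: inP_def)
      then show ?thesis by blast
    next
      case dk: False
      obtain m where m: "m \<ge> 1" "x = aseq k m \<or> x = bseq k m" using cover[OF k, of x] xk by auto
      have bm: "bseq k m = aseq k m + k + m" using b_eq m by simp
      from m(2) show ?thesis
      proof
        assume xb: "x = bseq k m"
        then have "(x, aseq k m) \<in> moves k x y" using mvI2 bm m xy by simp
        moreover have "inP k x (aseq k m)" using xb m unfolding inP_def by auto
        ultimately show ?thesis by blast
      next
        assume xa: "x = aseq k m"
        have "y \<noteq> bseq k m" using nP xa m unfolding inP_def by auto
        then consider "y > bseq k m" | "y < bseq k m" by linarith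
        then show ?thesis
        proof cases
          case 1
          then have "(x, bseq k m) \<in> moves k x y" using mvI2 by simp
          moreover have "inP k x (bseq k m)" using xa m unfolding inP_def by auto
          ultimately show ?thesis by blast
        next
          case 2
          define j where "j = y - x - k"
          have j: "1 \<le> j" "j < m" using dk 2 bm xa unfolding j_def by auto
          have aj: "aseq k j < aseq k m" using a_mono[OF k j(1) j(2)] .
          have bj: "bseq k j = aseq k j + k + j" using b_eq j by simp
          define t where "t = aseq k m - aseq k j"
          have "(x - t, y - t) \<in> moves k x y" using mvI3[of t] aj xa unfolding t_def by simp
          moreover have "x - t = aseq k j" "y - t = bseq k j"
            using aj xa bj dk xy unfolding t_def j_def by auto
          moreover have "inP k (aseq k j) (bseq k j)" using j unfolding inP_def by auto
          ultimately show ?thesis by metis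
        qed
      qed
    qed
  qed
qed

lemma exists_move:
  assumes k: "k \<ge> 1" and nT: "x + y > k" and nP: "\<not> inP k x y"
  shows "\<exists>u v. (u, v) \<in> moves k x y \<and> inP k u v"
proof (cases "x \<le> y")
  case True then show ?thesis using exists_move_le[OF k nT True nP] by blast
next
  case False
  then have "\<exists>u v. (u, v) \<in> moves k y x \<and> inP k u v"
    using exists_move_le[OF k, of y x] nT nP inP_sym by simp
  then show ?thesis using moves_sym inP_sym by blast
qed

lemma isP_inP: assumes k: "k \<ge> 1" shows "isP k x y = inP k x y"
proof (induction "x + y" arbitrary: x y rule: less_induct)
  case less
  have IH: "\<And>u v. (u, v) \<in> moves k x y \<Longrightarrow> isP k u v = inP k u v"
    using less moves_decrease by blast
  have eq: "isP k x y = (\<forall>p \<in> moves k x y. \<not> inP k (fst p) (snd p))"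
    using IH by (subst isP.simps) auto
  show ?case
  proof (cases "x + y \<le> k")
    case True
    then show ?thesis using eq by (simp add: moves_def Tset_def inP_def)
  next
    case False
    then have nT: "x + y > k" by simp
    show ?thesis
    proof
      assume "isP k x y"
      then show "inP k x y" using eq exists_move[OF k nT] by fastforce
    next
      assume "inP k x y"
      then show "isP k x y" using eq no_move[OF k _ nT] by fastforce
    qed
  qed
qed

theorem theorem5p3:
  fixes k :: nat
  assumes "k \<ge> 1"
  shows "{(x, y). isP k x y} =
           Tset k \<union> {(bseq k n, aseq k n) | n. n \<ge> 1} \<union> {(aseq k n, bseq k n) | n. n \<ge> 1}"
  using isP_inP[OF assms] by (auto simp: inP_def Tset_def)

end
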